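(* Let $A$ be a connectivity class of external positions which is not the frame class, and let $\pi$ be an even permutation of $A$. Then there exists a combination $g$ such that $g(p)=\pi(p)$ for all $p\in A$ and $g(q,l)=(q,l)$ for every external position $q\notin A$ and every $l\in B(q)$.
   Context: Fix integers $k\ge 2$, $n\ge 3$, $M=\{0,\dots,k-1\}$. Positions are $p\in M^n$; $B(p)=\{i:p_i\in\{0,k-1\}\}$, $p$ external if $B(p)\ne\emptyset$ (internal positions are disregarded). For distinct $i,j$, $\psi_{i,j}:M^n\to M^n$ is $(\psi_{i,j}p)_i=k-1-p_j$, $(\psi_{i,j}p)_j=p_i$, other coordinates unchanged; $B(\psi_{i,j}p)=\tau_{ij}(B(p))$ where $\tau_{ij}$ is the transposition of $i,j$. A move is given by distinct $i,j$ and constants $c_l\in M$ ($l\notin\{i,j\}$): it applies $\psi_{i,j}$ to all positions $p$ with $p_l=c_l$ ($l\notin\{i,j\}$) and fixes the others. It also acts on $X=\{(p,l): p\text{ external}, l\in B(p)\}$ (pairs recording the orientation face $l$ of the cubie at $p$) by $(p,l)\mapsto(\psi_{i,j}(p),\tau_{ij}(l))$ for $p$ in its layer, and fixes the other pairs. A combination is a finite sequence of moves, acting on positions and on $X$ by composition. Connectivity classes are the orbits of external positions under combinations. For odd $k$, the frame class is the set of positions with exactly one coordinate in $\{0,k-1\}$ and all other coordinates equal to $(k-1)/2$; for even $k$ there is no frame class. *)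

theory Defs
  imports "HOL-Combinatorics.Permutations"
begin

text \<open>Positions p in M^n are lists of length n with entries in M = {0..<k}.
  Coordinates are indexed by {0..<n}.\<close>

definition positions :: "nat \<Rightarrow> nat \<Rightarrow> nat list set" where
  "positions k n = {p. length p = n \<and> (\<forall>i<n. p ! i < k)}"

definition Bset :: "nat \<Rightarrow> nat list \<Rightarrow> nat set" where
  "Bset k p = {i. i < length p \<and> (p ! i = 0 \<or> p ! i = k - 1)}"

definition external :: "nat \<Rightarrow> nat \<Rightarrow> nat list \<Rightarrow> bool" where
  "external k n p \<longleftrightarrow> p \<in> positions k n \<and> Bset k p \<noteq> {}"

definition psi :: "nat \<Rightarrow> nat \<Rightarrow> nat \<Rightarrow> nat list \<Rightarrow> nat list" where
  "psi k i j p = p[i := k - 1 - p ! j, j := p ! i]"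

definition tau :: "nat \<Rightarrow> nat \<Rightarrow> nat \<Rightarrow> nat" where
  "tau i j l = (if l = i then j else if l = j then i else l)"

text \<open>A move is a triple (i, j, c) with distinct i, j < n and constants c l in M
  for l not in {i,j} (values of c at i, j are irrelevant).\<close>
type_synonym move = "nat \<times> nat \<times> (nat \<Rightarrow> nat)"

definition valid_move :: "nat \<Rightarrow> nat \<Rightarrow> move \<Rightarrow> bool" where
  "valid_move k n m = (case m of (i, j, c) \<Rightarrow>
     i < n \<and> j < n \<and> i \<noteq> j \<and> (\<forall>l<n. l \<noteq> i \<and> l \<noteq> j \<longrightarrow> c l < k))"

definition in_layer :: "nat \<Rightarrow> move \<Rightarrow> nat list \<Rightarrow> bool" where
  "in_layer n m p = (case m of (i, j, c) \<Rightarrow>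
     (\<forall>l<n. l \<noteq> i \<and> l \<noteq> j \<longrightarrow> p ! l = c l))"

definition move_pos :: "nat \<Rightarrow> nat \<Rightarrow> move \<Rightarrow> nat list \<Rightarrow> nat list" where
  "move_pos k n m p = (case m of (i, j, c) \<Rightarrow>
     (if in_layer n m p then psi k i j p else p))"

definition move_X :: "nat \<Rightarrow> nat \<Rightarrow> move \<Rightarrow> nat list \<times> nat \<Rightarrow> nat list \<times> nat" where
  "move_X k n m x = (case m of (i, j, c) \<Rightarrow> (case x of (p, l) \<Rightarrow>
     (if in_layer n m p then (psi k i j p, tau i j l) else (p, l))))"

text \<open>A combination is a finite list of moves [m1, ..., mr]; it acts by
  first applying m1, then m2, etc.\<close>
definition valid_comb :: "nat \<Rightarrow> nat \<Rightarrow> move list \<Rightarrow> bool" where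
  "valid_comb k n g \<longleftrightarrow> (\<forall>m\<in>set g. valid_move k n m)"

definition comb_pos :: "nat \<Rightarrow> nat \<Rightarrow> move list \<Rightarrow> nat list \<Rightarrow> nat list" where
  "comb_pos k n g p = fold (move_pos k n) g p"

definition comb_X :: "nat \<Rightarrow> nat \<Rightarrow> move list \<Rightarrow> nat list \<times> nat \<Rightarrow> nat list \<times> nat" where
  "comb_X k n g x = fold (move_X k n) g x"

definition conn_class :: "nat \<Rightarrow> nat \<Rightarrow> nat list set \<Rightarrow> bool" where
  "conn_class k n A \<longleftrightarrow> (\<exists>p. external k n p \<and>
     A = {comb_pos k n g p | g. valid_comb k n g})"

definition frame_class :: "nat \<Rightarrow> nat \<Rightarrow> nat list set" where
  "frame_class k n = (if odd k then
     {p \<in> positions k n. card (Bset k p) = 1 \<and>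
        (\<forall>i<n. i \<notin> Bset k p \<longrightarrow> p ! i = (k - 1) div 2)}
   else {})"

end

theory Submission
  imports Defs
begin


lemma psi_length[simp]: "length (psi k i j p) = length p"
  by (simp add: psi_def)

lemma psi_nth:
  assumes "i < length p" "j < length p" "i \<noteq> j"
  shows "psi k i j p ! t = (if t = i then k - 1 - p ! j else if t = j then p ! i else p ! t)"
  using assms by (auto simp: psi_def nth_list_update)

lemma positionsD: "p \<in> positions k n \<Longrightarrow> length p = n \<and> (\<forall>i<n. p ! i < k)"
  by (simp add: positions_def)

lemma psi_positions:
  assumes "p \<in> positions k n" "i < n" "j < n" "i \<noteq> j"
  shows "psi k i j p \<in> positions k n"
  using assms unfolding positions_def by (auto simp: psi_nth)

lemma psi4:
  assumes "p \<in> positions k n" "i < n" "j < n" "i \<noteq> j"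
  shows "psi k i j (psi k i j (psi k i j (psi k i j p))) = p"
proof (rule nth_equalityI)
  show "length (psi k i j (psi k i j (psi k i j (psi k i j p)))) = length p" by simp
  fix t assume "t < length (psi k i j (psi k i j (psi k i j (psi k i j p))))"
  have L: "length p = n" and B: "p ! i < k" "p ! j < k" using assms by (auto simp: positions_def)
  show "psi k i j (psi k i j (psi k i j (psi k i j p))) ! t = p ! t"
    using assms L B by (simp add: psi_nth)
qed

lemma tau4: "tau i j (tau i j (tau i j (tau i j l))) = l"
  by (simp add: tau_def)

lemma valid_moveD: "valid_move k n (i, j, c) \<Longrightarrow> i < n \<and> j < n \<and> i \<noteq> j \<and> (\<forall>l<n. l \<noteq> i \<and> l \<noteq> j \<longrightarrow> c l < k)"
  by (simp add: valid_move_def)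

lemma in_layer_psi:
  assumes "length p = n" "i < n" "j < n" "i \<noteq> j"
  shows "in_layer n (i, j, c) (psi k i j p) = in_layer n (i, j, c) p"
  using assms by (simp add: in_layer_def psi_nth)

lemma move_X_fst: "fst (move_X k n m (p, l)) = move_pos k n m p"
  by (cases m) (auto simp: move_X_def move_pos_def)

lemma comb_X_fst: "fst (comb_X k n g (p, l)) = comb_pos k n g p"
proof (induction g arbitrary: p l)
  case Nil then show ?case by (simp add: comb_X_def comb_pos_def)
next
  case (Cons m g)
  obtain p' l' where e: "move_X k n m (p, l) = (p', l')" by (cases "move_X k n m (p, l)")
  have "p' = move_pos k n m p" using move_X_fst[of k n m p l] e by simp
  then show ?case using Cons[of p' l'] e by (simp add: comb_X_def comb_pos_def)
qed

lemma move_pos_positions: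
  assumes "valid_move k n m" "p \<in> positions k n"
  shows "move_pos k n m p \<in> positions k n"
  using assms by (cases m) (auto simp: move_pos_def valid_move_def intro: psi_positions)

lemma comb_pos_positions:
  assumes "valid_comb k n g" "p \<in> positions k n"
  shows "comb_pos k n g p \<in> positions k n"
  using assms
proof (induction g arbitrary: p)
  case Nil then show ?case by (simp add: comb_pos_def)
next
  case (Cons m g)
  then show ?case using move_pos_positions[of k n m p]
    by (simp add: comb_pos_def valid_comb_def)
qed

lemma comb_X_append: "comb_X k n (g @ h) x = comb_X k n h (comb_X k n g x)"
  by (simp add: comb_X_def)
lemma comb_pos_append: "comb_pos k n (g @ h) x = comb_pos k n h (comb_pos k n g x)"
  by (simp add: comb_pos_def)
lemma comb_X_Cons: "comb_X k n (m # g) x = comb_X k n g (move_X k n m x)"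
  by (simp add: comb_X_def)
lemma comb_pos_Cons: "comb_pos k n (m # g) x = comb_pos k n g (move_pos k n m x)"
  by (simp add: comb_pos_def)
lemma comb_X_Nil[simp]: "comb_X k n [] x = x" by (simp add: comb_X_def)
lemma comb_pos_Nil[simp]: "comb_pos k n [] x = x" by (simp add: comb_pos_def)

lemma move_X_4:
  assumes "valid_move k n m" "fst x \<in> positions k n"
  shows "move_X k n m (move_X k n m (move_X k n m (move_X k n m x))) = x"
proof -
  obtain i j c where m: "m = (i, j, c)" by (cases m)
  obtain p l where x: "x = (p, l)" by (cases x)
  have v: "i < n" "j < n" "i \<noteq> j" using assms m by (auto simp: valid_move_def)
  have p: "p \<in> positions k n" using assms x by simp
  have L: "length p = n" using p by (simp add: positions_def)
  have il: "\<And>q. q \<in> positions k n \<Longrightarrow> in_layer n m (psi k i j q) = in_layer n m q"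
    using m v by (simp add: in_layer_psi positions_def)
  have pp: "\<And>q. q \<in> positions k n \<Longrightarrow> psi k i j q \<in> positions k n"
    using v psi_positions by blast
  show ?thesis
  proof (cases "in_layer n m p")
    case True
    have p1: "psi k i j p \<in> positions k n" using pp p by blast
    have p2: "psi k i j (psi k i j p) \<in> positions k n" using pp p1 by blast
    have p3: "psi k i j (psi k i j (psi k i j p)) \<in> positions k n" using pp p2 by blast
    show ?thesis using True m x il[OF p] il[OF p1] il[OF p2] il[OF p3] psi4[OF p v] tau4[of i j l]
      by (simp add: move_X_def)
  next
    case False then show ?thesis using m x by (simp add: move_X_def)
  qed
qed

lemma move_X_Omega:
  assumes "valid_move k n m" "fst x \<in> positions k n"
  shows "fst (move_X k n m x) \<in> positions k n"
  using assms move_pos_positions[of k n m "fst x"] move_X_fst[of k n m "fst x" "snd x"] by simp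

lemma comb_X_Omega:
  assumes "valid_comb k n g" "fst x \<in> positions k n"
  shows "fst (comb_X k n g x) \<in> positions k n"
  using assms comb_pos_positions[of k n g "fst x"] comb_X_fst[of k n g "fst x" "snd x"] by simp

definition cinv :: "move list \<Rightarrow> move list" where
  "cinv g = concat (map (\<lambda>m. [m, m, m]) (rev g))"

lemma cinv_Cons: "cinv (m # g) = cinv g @ [m, m, m]"
  by (simp add: cinv_def)
lemma cinv_Nil[simp]: "cinv [] = []" by (simp add: cinv_def)

lemma valid_cinv: "valid_comb k n g \<Longrightarrow> valid_comb k n (cinv g)"
  by (auto simp: cinv_def valid_comb_def)

lemma cinv_left:
  assumes "valid_comb k n g" "fst x \<in> positions k n"
  shows "comb_X k n (cinv g) (comb_X k n g x) = x"
  using assms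
proof (induction g arbitrary: x)
  case Nil then show ?case by simp
next
  case (Cons m g)
  have vm: "valid_move k n m" and vg: "valid_comb k n g" using Cons.prems by (auto simp: valid_comb_def)
  have "fst (move_X k n m x) \<in> positions k n" using move_X_Omega[OF vm] Cons.prems by blast
  then have "comb_X k n (cinv g) (comb_X k n g (move_X k n m x)) = move_X k n m x"
    using Cons.IH vg by blast
  then show ?case using move_X_4[OF vm Cons.prems(2)]
    by (simp add: cinv_Cons comb_X_append comb_X_Cons)
qed

lemma cinv_right:
  assumes "valid_comb k n g" "fst x \<in> positions k n"
  shows "comb_X k n g (comb_X k n (cinv g) x) = x"
  using assms
proof (induction g arbitrary: x)
  case Nil then show ?case by simp
next
  case (Cons m g)
  have vm: "valid_move k n m" and vg: "valid_comb k n g" using Cons.prems by (auto simp: valid_comb_def)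
  have o: "fst (comb_X k n (cinv g) x) \<in> positions k n"
    using comb_X_Omega[OF valid_cinv[OF vg] Cons.prems(2)] .
  have "comb_X k n g (comb_X k n (cinv g) x) = x" using Cons.IH vg Cons.prems by blast
  then show ?case using move_X_4[OF vm o]
    by (simp add: cinv_Cons comb_X_append comb_X_Cons)
qed

lemma cinv_left_pos:
  assumes "valid_comb k n g" "p \<in> positions k n"
  shows "comb_pos k n (cinv g) (comb_pos k n g p) = p"
  using cinv_left[OF assms(1), of "(p,0)"] assms comb_X_fst
  by (metis comb_X_fst fst_conv prod.collapse)

lemma cinv_right_pos:
  assumes "valid_comb k n g" "p \<in> positions k n"
  shows "comb_pos k n g (comb_pos k n (cinv g) p) = p"
  using cinv_right[OF assms(1), of "(p,0)"] assms
  by (metis comb_X_fst fst_conv prod.collapse)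




lemma comm_supp:
  assumes AO: "\<And>x. x \<in> \<Omega> \<Longrightarrow> A x \<in> \<Omega>" and AO': "\<And>x. x \<in> \<Omega> \<Longrightarrow> A' x \<in> \<Omega>"
    and A1: "\<And>x. x \<in> \<Omega> \<Longrightarrow> A' (A x) = x" and A2: "\<And>x. x \<in> \<Omega> \<Longrightarrow> A (A' x) = x"
    and GO: "\<And>x. x \<in> \<Omega> \<Longrightarrow> G x \<in> \<Omega>" and GO': "\<And>x. x \<in> \<Omega> \<Longrightarrow> G' x \<in> \<Omega>"
    and G1: "\<And>x. x \<in> \<Omega> \<Longrightarrow> G' (G x) = x" and G2: "\<And>x. x \<in> \<Omega> \<Longrightarrow> G (G' x) = x"
    and x: "x \<in> \<Omega>" and ne: "A (G (A' (G' x))) \<noteq> x"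
  shows "\<exists>y\<in>\<Omega>. A y \<noteq> y \<and> G y \<noteq> y \<and> (x = y \<or> x = A y \<or> x = G y)"
proof (cases "G' x = x")
  case True
  then have Gx: "G x = x" using G2 x by metis
  have "A' x \<noteq> x" using ne True Gx A2 x by metis
  let ?y = "A' x"
  have yO: "?y \<in> \<Omega>" using AO' x by blast
  have Ay: "A ?y = x" using A2 x by blast
  have "G ?y \<noteq> ?y" using ne True Ay by auto
  then show ?thesis using yO Ay \<open>A' x \<noteq> x\<close> by metis
next
  case False
  let ?y = "G' x"
  have yO: "?y \<in> \<Omega>" using GO' x by blast
  have Gy: "G ?y = x" using G2 x by blast
  show ?thesis
  proof (cases "A' ?y = ?y")
    case True
    then have "A x \<noteq> x" using ne Gy by auto
    moreover have "G x \<noteq> x" using False G1 x by metis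
    ultimately show ?thesis using x by blast
  next
    case F2: False
    have "A ?y \<noteq> ?y" using F2 A1 yO by metis
    then show ?thesis using yO Gy False by metis
  qed
qed

definition cyc3 :: "'a \<Rightarrow> 'a \<Rightarrow> 'a \<Rightarrow> 'a \<Rightarrow> 'a" where
  "cyc3 a b c x = (if x = a then b else if x = b then c else if x = c then a else x)"

lemma cyc3_transp: "distinct [a,b,c] \<Longrightarrow> cyc3 a b c = transpose a b \<circ> transpose b c"
  by (auto simp: fun_eq_iff cyc3_def transpose_def)

lemma cyc3_permutes: "distinct [a,b,c] \<Longrightarrow> a \<in> S \<Longrightarrow> b \<in> S \<Longrightarrow> c \<in> S \<Longrightarrow> cyc3 a b c permutes S"
  by (simp add: cyc3_transp permutes_compose permutes_swap_id)

lemma cyc3_permutation: "distinct [a,b,c] \<Longrightarrow> permutation (cyc3 a b c)"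
  by (simp add: cyc3_transp permutation_compose permutation_swap_id)

lemma cyc3_even: "distinct [a,b,c] \<Longrightarrow> evenperm (cyc3 a b c)"
  by (simp add: cyc3_transp evenperm_comp permutation_swap_id evenperm_swap)

lemma cyc3_inv: "distinct [a,b,c] \<Longrightarrow> cyc3 a c b (cyc3 a b c z) = z"
  by (auto simp: cyc3_def)

lemma even_decomp:
  assumes "finite A" "\<rho> permutes A" "evenperm \<rho>" "P id"
    and C: "\<And>a b c. distinct [a,b,c] \<Longrightarrow> a \<in> A \<Longrightarrow> b \<in> A \<Longrightarrow> c \<in> A \<Longrightarrow> P (cyc3 a b c)"
    and comp: "\<And>f g. f permutes A \<Longrightarrow> P f \<Longrightarrow> P g \<Longrightarrow> P (g \<circ> f)"
  shows "P \<rho>"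
proof -
  have "\<forall>\<rho>. card {x. \<rho> x \<noteq> x} = N \<longrightarrow> \<rho> permutes A \<longrightarrow> evenperm \<rho> \<longrightarrow> P \<rho>" for N
  proof (induction N rule: less_induct)
    case (less N)
    show ?case
    proof (intro allI impI)
      fix \<rho> assume cN: "card {x. \<rho> x \<noteq> x} = N" and pr: "\<rho> permutes A" and ev: "evenperm \<rho>"
      have subA: "{x. \<rho> x \<noteq> x} \<subseteq> A" using pr permutes_not_in by fastforce
      have fin: "finite {x. \<rho> x \<noteq> x}" using subA assms(1) finite_subset by blast
      have inj: "inj \<rho>" using pr permutes_inj by blast
      show "P \<rho>"
      proof (cases "\<rho> = id")
        case True then show ?thesis using assms(4) by simp
      next
        case False
        then obtain a where a: "\<rho> a \<noteq> a" by (auto simp: fun_eq_iff)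
        define b where "b = \<rho> a"
        have bs: "\<rho> b \<noteq> b" using a inj b_def by (metis injD)
        have "\<exists>y. \<rho> y \<noteq> y \<and> y \<noteq> a \<and> y \<noteq> b"
        proof (rule ccontr)
          assume "\<not> ?thesis"
          then have supp: "\<And>y. y \<noteq> a \<Longrightarrow> y \<noteq> b \<Longrightarrow> \<rho> y = y" by blast
          have "\<rho> (\<rho> b) \<noteq> \<rho> b" using bs inj by (metis injD)
          then have "\<rho> b = a"
            using supp[of "\<rho> b"] bs by blast
          then have "\<rho> = transpose a b"
            using supp b_def by (auto simp: fun_eq_iff transpose_def)
          then show False using ev a b_def evenperm_swap by metis
        qed
        then obtain y where y: "\<rho> y \<noteq> y" "y \<noteq> a" "y \<noteq> b" by blast
        have ab: "a \<noteq> b" using a b_def by simp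
        have inA: "a \<in> A" "b \<in> A" "y \<in> A" using subA a bs y by auto
        define C where "C = cyc3 b a y"
        define \<rho>' where "\<rho>' = C \<circ> \<rho>"
        have dC: "distinct [b,a,y]" using ab y by auto
        have pr': "\<rho>' permutes A" unfolding \<rho>'_def C_def
          using permutes_compose[OF pr cyc3_permutes[OF dC]] inA by blast
        have ev': "evenperm \<rho>'"
          unfolding \<rho>'_def C_def using evenperm_comp[OF cyc3_permutation[OF dC], of \<rho>] ev
            cyc3_even[OF dC] pr permutation_permutes assms(1) by blast
        have sub: "{x. \<rho>' x \<noteq> x} \<subseteq> {x. \<rho> x \<noteq> x} - {a}"
        proof
          fix x assume "x \<in> {x. \<rho>' x \<noteq> x}"
          then have x: "\<rho>' x \<noteq> x" by simp
          have "\<rho>' a = a" by (simp add: \<rho>'_def C_def cyc3_def b_def)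
          then have "x \<noteq> a" using x by auto
          moreover have "\<rho> x \<noteq> x"
          proof
            assume e: "\<rho> x = x"
            then have "x \<noteq> b" "x \<noteq> y" using bs y by auto
            then show False using x e \<open>x \<noteq> a\<close> by (simp add: \<rho>'_def C_def cyc3_def)
          qed
          ultimately show "x \<in> {x. \<rho> x \<noteq> x} - {a}" by simp
        qed
        have "card {x. \<rho>' x \<noteq> x} \<le> card ({x. \<rho> x \<noteq> x} - {a})"
          using sub fin by (intro card_mono) auto
        also have "\<dots> < card {x. \<rho> x \<noteq> x}"
          using fin a by (intro card_Diff1_less) auto
        finally have "card {x. \<rho>' x \<noteq> x} < N" using cN by simp
        then have P': "P \<rho>'" using less.IH pr' ev' by blast
        have dC2: "distinct [b,y,a]" using dC by auto
        have "cyc3 b y a \<circ> \<rho>' = \<rho>"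
          unfolding \<rho>'_def C_def using dC cyc3_inv[OF dC] by (simp add: fun_eq_iff)
        then show "P \<rho>" using comp[OF pr' P' C[OF dC2]] inA by simp
      qed
    qed
  qed
  then show ?thesis using assms(2,3) by blast
qed




lemma cyc3_rot: "distinct [a,b,c] \<Longrightarrow> cyc3 b c a = cyc3 a b c"
  by (auto simp: fun_eq_iff cyc3_def)

lemma cyc3_sq: "distinct [a,b,c] \<Longrightarrow> cyc3 a b c \<circ> cyc3 a b c = cyc3 a c b"
  by (auto simp: fun_eq_iff cyc3_def)

lemma cyc3_conj:
  assumes "\<And>x. \<rho> (\<rho>' x) = x" "\<And>x. \<rho>' (\<rho> x) = x" "distinct [a,b,c]"
  shows "\<rho> \<circ> cyc3 a b c \<circ> \<rho>' = cyc3 (\<rho> a) (\<rho> b) (\<rho> c)"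
proof
  fix x
  have inj: "\<And>u v. \<rho> u = \<rho> v \<Longrightarrow> u = v" using assms(2) by metis
  show "(\<rho> \<circ> cyc3 a b c \<circ> \<rho>') x = cyc3 (\<rho> a) (\<rho> b) (\<rho> c) x"
  proof (cases "x = \<rho> a \<or> x = \<rho> b \<or> x = \<rho> c")
    case True
    have ne: "\<rho> a \<noteq> \<rho> b" "\<rho> a \<noteq> \<rho> c" "\<rho> b \<noteq> \<rho> c" using inj assms(3) by auto
    from True consider "x = \<rho> a" | "x = \<rho> b" | "x = \<rho> c" by blast
    then show ?thesis
    proof cases
      case 1 then show ?thesis using assms(2,3) ne by (simp add: cyc3_def)
    next
      case 2 then show ?thesis using assms(2,3) ne by (auto simp: cyc3_def)
    next
      case 3 then show ?thesis using assms(2,3) ne by (auto simp: cyc3_def)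
    qed
  next
    case False
    then have "\<rho>' x \<noteq> a" "\<rho>' x \<noteq> b" "\<rho>' x \<noteq> c" using assms(1) by metis+
    then show ?thesis using False assms(1) by (simp add: cyc3_def)
  qed
qed

lemma cyc3_image: "a \<in> A \<Longrightarrow> b \<in> A \<Longrightarrow> c \<in> A \<Longrightarrow> cyc3 a b c ` A \<subseteq> A"
  by (auto simp: cyc3_def)

lemma cyc3_in: "a \<in> A \<Longrightarrow> b \<in> A \<Longrightarrow> c \<in> A \<Longrightarrow> x \<in> A \<Longrightarrow> cyc3 a b c x \<in> A"
  by (auto simp: cyc3_def)

locale cyc_closed =
  fixes A :: "'a set" and Nr :: "('a \<Rightarrow> 'a) \<Rightarrow> bool"
  assumes comp: "\<And>f g. Nr f \<Longrightarrow> Nr g \<Longrightarrow> f ` A \<subseteq> A \<Longrightarrow> Nr (g \<circ> f)"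
begin

lemma sq:
  assumes "Nr (cyc3 a b c)" "distinct [a,b,c]" "a \<in> A" "b \<in> A" "c \<in> A"
  shows "Nr (cyc3 a c b)"
  using comp[OF assms(1) assms(1) cyc3_image[OF assms(3-5)]] cyc3_sq[OF assms(2)] by simp

lemma conj:
  assumes "Nr (cyc3 a b c)" "distinct [a,b,c]" "a \<in> A" "b \<in> A" "c \<in> A"
    and "Nr (cyc3 y w v)" "distinct [y,w,v]" "y \<in> A" "w \<in> A" "v \<in> A"
  shows "Nr (cyc3 (cyc3 y w v a) (cyc3 y w v b) (cyc3 y w v c))"
proof -
  let ?r = "cyc3 y w v" and ?r' = "cyc3 y v w"
  have r': "Nr ?r'" using sq assms(6-10) by blast
  have d': "distinct [y,v,w]" using assms(7) by auto
  have "Nr (cyc3 a b c \<circ> ?r')" using comp[OF r' assms(1) cyc3_image] assms by blast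
  then have "Nr (?r \<circ> (cyc3 a b c \<circ> ?r'))"
    using comp[OF _ assms(6)] cyc3_image[of a A b c] cyc3_image[of y A v w] assms
    by (metis image_comp image_mono order_trans)
  moreover have "?r \<circ> cyc3 a b c \<circ> ?r' = cyc3 (?r a) (?r b) (?r c)"
    by (rule cyc3_conj) (use assms(2,7) cyc3_inv[OF assms(7)] cyc3_inv[OF d'] in auto)
  ultimately show ?thesis by (simp add: comp_assoc)
qed

definition E :: "'a \<Rightarrow> 'a \<Rightarrow> bool" where
  "E x y \<longleftrightarrow> x \<in> A \<and> y \<in> A \<and> (x = y \<or> (\<exists>z\<in>A. distinct [x,y,z] \<and> Nr (cyc3 x y z)))"

lemma E_trans:
  assumes "E x y" "E y w" shows "E x w"
proof -
  have xA: "x \<in> A" "y \<in> A" "w \<in> A" using assms by (auto simp: E_def)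
  show ?thesis
  proof (cases "x = y \<or> y = w \<or> x = w")
    case True then show ?thesis using assms xA by (auto simp: E_def)
  next
    case False
    obtain z where z: "z \<in> A" "distinct [x,y,z]" "Nr (cyc3 x y z)" using assms(1) False by (auto simp: E_def)
    obtain v where v: "v \<in> A" "distinct [y,w,v]" "Nr (cyc3 y w v)" using assms(2) False by (auto simp: E_def)
    show ?thesis
    proof (cases "x = v")
      case True
      have "Nr (cyc3 x y w)" using v True cyc3_rot[of x y w] False by auto
      then have "Nr (cyc3 x w y)" using sq[of x y w] xA False by auto
      then show ?thesis using xA False by (auto simp: E_def)
    next
      case xv: False
      have c: "Nr (cyc3 (cyc3 y w v x) (cyc3 y w v y) (cyc3 y w v z))"
        using conj[OF z(3) z(2) xA(1,2) z(1) v(3) v(2) xA(2,3) v(1)] .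
      have e1: "cyc3 y w v x = x" using xv False by (simp add: cyc3_def)
      have e2: "cyc3 y w v y = w" by (simp add: cyc3_def)
      have inj: "cyc3 y w v z \<noteq> x" "cyc3 y w v z \<noteq> w"
        using z(2) v(2) xv False unfolding cyc3_def by auto
      have "cyc3 y w v z \<in> A" using cyc3_in[OF xA(2) xA(3) v(1) z(1)] .
      then show ?thesis using c e1 e2 inj xA False by (auto simp: E_def)
    qed
  qed
qed

lemma all3:
  assumes all: "\<And>x y. x \<in> A \<Longrightarrow> y \<in> A \<Longrightarrow> E x y"
    and d: "distinct [a,b,c]" and inA: "a \<in> A" "b \<in> A" "c \<in> A"
  shows "Nr (cyc3 a b c)"
proof -
  obtain z where z: "z \<in> A" "distinct [a,b,z]" "Nr (cyc3 a b z)" using all[of a b] d inA by (auto simp: E_def)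
  show ?thesis
  proof (cases "z = c")
    case True then show ?thesis using z by simp
  next
    case zc: False
    obtain w where w: "w \<in> A" "distinct [z,c,w]" "Nr (cyc3 z c w)" using all[of z c] zc z inA by (auto simp: E_def)
    have dz: "distinct [a,b,c,z]" using d z zc by auto
    consider "w \<noteq> a \<and> w \<noteq> b" | "w = a" | "w = b" by blast
    then show ?thesis
    proof cases
      case 1
      have "Nr (cyc3 (cyc3 z c w a) (cyc3 z c w b) (cyc3 z c w z))"
        using conj[OF z(3) z(2) inA(1,2) z(1) w(3) w(2) z(1) inA(3) w(1)] .
      moreover have "cyc3 z c w a = a" "cyc3 z c w b = b" "cyc3 z c w z = c"
        using 1 dz by (auto simp: cyc3_def)
      ultimately show ?thesis by simp
    next
      case 2
      have "Nr (cyc3 (cyc3 a b z z) (cyc3 a b z c) (cyc3 a b z a))"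
        using conj[OF w(3) w(2) z(1) inA(3) w(1) z(3) z(2) inA(1,2) z(1)] 2 by simp
      moreover have "cyc3 a b z z = a" "cyc3 a b z c = c" "cyc3 a b z a = b"
        using dz by (auto simp: cyc3_def)
      ultimately have "Nr (cyc3 a c b)" by simp
      then show ?thesis using sq[of a c b] dz inA by auto
    next
      case 3
      have n: "Nr (cyc3 a z b)" using sq[OF z(3) z(2) inA(1,2) z(1)] .
      have "Nr (cyc3 (cyc3 a z b z) (cyc3 a z b c) (cyc3 a z b b))"
        using conj[OF w(3) w(2) z(1) inA(3) w(1) n] 3 dz inA z by auto
      moreover have "cyc3 a z b z = b" "cyc3 a z b c = c" "cyc3 a z b b = a"
        using dz by (auto simp: cyc3_def)
      ultimately have "Nr (cyc3 b c a)" by simp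
      then show ?thesis using cyc3_rot[OF d] by simp
    qed
  qed
qed

end




lemma psi_inv:
  assumes "p \<in> positions k n" "u < n" "v < n" "u \<noteq> v"
  shows "psi k u v (psi k v u p) = p"
proof (rule nth_equalityI)
  show "length (psi k u v (psi k v u p)) = length p" by simp
  fix t assume "t < length (psi k u v (psi k v u p))"
  have L: "length p = n" and B: "p ! u < k" "p ! v < k" using assms by (auto simp: positions_def)
  show "psi k u v (psi k v u p) ! t = p ! t"
    using assms L B by (simp add: psi_nth)
qed

lemma move_pos_4:
  assumes "valid_move k n m" "p \<in> positions k n"
  shows "move_pos k n m (move_pos k n m (move_pos k n m (move_pos k n m p))) = p"
  using move_X_4[OF assms(1), of "(p,0)"] assms(2) move_X_fst
  by (metis fst_conv prod.collapse)

lemma move_X_notin: "\<not> in_layer n m (fst x) \<Longrightarrow> move_X k n m x = x"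
  by (cases m; cases x) (auto simp: move_X_def)

lemma move_pos_notin: "\<not> in_layer n m p \<Longrightarrow> move_pos k n m p = p"
  by (cases m) (auto simp: move_pos_def)

lemma move_X_in: "in_layer n (u,v,c) p \<Longrightarrow> fst (move_X k n (u,v,c) (p,l)) = psi k u v p"
  by (auto simp: move_X_def)

lemma move_pos_in: "in_layer n (u,v,c) p \<Longrightarrow> move_pos k n (u,v,c) p = psi k u v p"
  by (auto simp: move_pos_def)

locale geo =
  fixes k n :: nat and r :: "nat list" and i j a :: nat and c :: "nat \<Rightarrow> nat"
  assumes rpos: "r \<in> positions k n"
    and vg: "valid_move k n (i, j, c)"
    and rin: "in_layer n (i, j, c) r"
    and rmov: "psi k i j r \<noteq> r"
    and an: "a < n" and ai: "a \<noteq> i" and aj: "a \<noteq> j"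
    and ci: "\<not> (r ! a = r ! i \<and> r ! a = k - 1 - r ! i)"
    and cj: "\<not> (r ! a = r ! j \<and> r ! a = k - 1 - r ! j)"
begin

abbreviation "cst \<equiv> (\<lambda>t. r ! t)"
abbreviation "e \<equiv> r ! a"
abbreviation "\<gamma> \<equiv> (i, j, c)"

definition "sg = (if e \<noteq> k - 1 - r ! i then (a, i, cst) else (i, a, cst))"
definition "tu = (if e \<noteq> k - 1 - r ! j then (a, j, cst) else (j, a, cst))"

lemma ij: "i < n" "j < n" "i \<noteq> j" using vg by (auto simp: valid_move_def)
lemma rL: "length r = n" using rpos by (simp add: positions_def)
lemma rk: "\<And>t. t < n \<Longrightarrow> r ! t < k" using rpos by (simp add: positions_def)

lemma valid_sg: "valid_move k n sg"
  using an ai ij rk by (auto simp: sg_def valid_move_def)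
lemma valid_tu: "valid_move k n tu"
  using an aj ij rk by (auto simp: tu_def valid_move_def)

lemma layer_sg: "in_layer n sg q \<longleftrightarrow> (\<forall>t<n. t \<noteq> a \<and> t \<noteq> i \<longrightarrow> q ! t = r ! t)"
  by (auto simp: sg_def in_layer_def)
lemma layer_tu: "in_layer n tu q \<longleftrightarrow> (\<forall>t<n. t \<noteq> a \<and> t \<noteq> j \<longrightarrow> q ! t = r ! t)"
  by (auto simp: tu_def in_layer_def)
lemma layer_g: "in_layer n \<gamma> q \<longleftrightarrow> (\<forall>t<n. t \<noteq> i \<and> t \<noteq> j \<longrightarrow> q ! t = r ! t)"
  using rin by (auto simp: in_layer_def)

lemma sg_a:
  assumes "q \<in> positions k n" "in_layer n sg q" "q ! i = r ! i"
  shows "move_pos k n sg q ! a \<noteq> e"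
proof -
  have L: "length q = n" using assms by (simp add: positions_def)
  show ?thesis
  proof (cases "e \<noteq> k - 1 - r ! i")
    case True
    then show ?thesis using assms L an ai ij
      by (simp add: sg_def move_pos_def psi_nth)
  next
    case False
    then show ?thesis using assms L an ai ij ci
      by (simp add: sg_def move_pos_def psi_nth)
  qed
qed

lemma tu_a:
  assumes "q \<in> positions k n" "in_layer n tu q" "q ! j = r ! j"
  shows "move_pos k n tu q ! a \<noteq> e"
proof -
  have L: "length q = n" using assms by (simp add: positions_def)
  show ?thesis
  proof (cases "e \<noteq> k - 1 - r ! j")
    case True
    then show ?thesis using assms L an aj ij
      by (simp add: tu_def move_pos_def psi_nth)
  next
    case False
    then show ?thesis using assms L an aj ij cj
      by (simp add: tu_def move_pos_def psi_nth)
  qed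
qed

definition "al = [tu, tu, tu, sg, sg, sg, tu, sg]"

lemma valid_al: "valid_comb k n al"
  using valid_sg valid_tu by (simp add: al_def valid_comb_def)

abbreviation "\<Omega> \<equiv> {x. fst x \<in> positions k n}"

lemma three_X: "\<lbrakk>valid_move k n m; x \<in> \<Omega>\<rbrakk> \<Longrightarrow> move_X k n m (move_X k n m (move_X k n m x)) \<in> \<Omega>"
  using move_X_Omega by (metis mem_Collect_eq)

lemma F2:
  assumes x: "fst x \<in> positions k n" and mv: "comb_X k n al x \<noteq> x" and lg: "in_layer n \<gamma> (fst x)"
  shows "fst x = r"
proof -
  let ?A = "move_X k n sg" and ?G = "move_X k n tu"
  let ?A' = "\<lambda>x. ?A (?A (?A x))" and ?G' = "\<lambda>x. ?G (?G (?G x))"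
  have eq: "comb_X k n al x = ?A (?G (?A' (?G' x)))" by (simp add: al_def comb_X_def)
  have "\<exists>y\<in>\<Omega>. ?A y \<noteq> y \<and> ?G y \<noteq> y \<and> (x = y \<or> x = ?A y \<or> x = ?G y)"
  proof (rule comm_supp[where A' = ?A' and G' = ?G'])
    show "\<And>x. x \<in> \<Omega> \<Longrightarrow> ?A x \<in> \<Omega>" using move_X_Omega[OF valid_sg] by simp
    show "\<And>x. x \<in> \<Omega> \<Longrightarrow> ?A' x \<in> \<Omega>" using three_X[OF valid_sg] by simp
    show "\<And>x. x \<in> \<Omega> \<Longrightarrow> ?A' (?A x) = x" using move_X_4[OF valid_sg] by simp
    show "\<And>x. x \<in> \<Omega> \<Longrightarrow> ?A (?A' x) = x" using move_X_4[OF valid_sg] by simp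
    show "\<And>x. x \<in> \<Omega> \<Longrightarrow> ?G x \<in> \<Omega>" using move_X_Omega[OF valid_tu] by simp
    show "\<And>x. x \<in> \<Omega> \<Longrightarrow> ?G' x \<in> \<Omega>" using three_X[OF valid_tu] by simp
    show "\<And>x. x \<in> \<Omega> \<Longrightarrow> ?G' (?G x) = x" using move_X_4[OF valid_tu] by simp
    show "\<And>x. x \<in> \<Omega> \<Longrightarrow> ?G (?G' x) = x" using move_X_4[OF valid_tu] by simp
    show "x \<in> \<Omega>" using x by simp
    show "?A (?G (?A' (?G' x))) \<noteq> x" using mv eq by simp
  qed
  then obtain y where y: "fst y \<in> positions k n" "?A y \<noteq> y" "?G y \<noteq> y" "x = y \<or> x = ?A y \<or> x = ?G y"
    by auto
  obtain p l where yp: "y = (p, l)" by (cases y)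
  have p: "p \<in> positions k n" using y yp by simp
  have pL: "length p = n" using p by (simp add: positions_def)
  have ls: "in_layer n sg p" using y(2) yp move_X_notin by (metis fst_conv)
  have lt: "in_layer n tu p" using y(3) yp move_X_notin by (metis fst_conv)
  have agree: "\<And>t. t < n \<Longrightarrow> t \<noteq> a \<Longrightarrow> p ! t = r ! t"
  proof -
    fix t assume "t < n" "t \<noteq> a"
    then show "p ! t = r ! t"
      using ls lt ij by (cases "t = i") (auto simp: layer_sg layer_tu)
  qed
  have ga: "\<And>q. in_layer n \<gamma> q \<Longrightarrow> q ! a = e" using layer_g an ai aj by blast
  consider "x = y" | "x = ?A y" | "x = ?G y" using y by blast
  then show ?thesis
  proof cases
    case 1
    have "p ! a = e" using ga lg 1 yp by simp
    have "p = r"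
    proof (rule nth_equalityI)
      show "length p = length r" using pL rL by simp
      fix t assume "t < length p"
      then show "p ! t = r ! t" using agree \<open>p ! a = e\<close> pL by (cases "t = a") auto
    qed
    then show ?thesis using 1 yp by simp
  next
    case 2
    have fx: "fst x = move_pos k n sg p" using 2 yp move_X_fst by metis
    have "move_pos k n sg p ! a \<noteq> e" using sg_a[OF p ls] agree ij ai by auto
    then show ?thesis using ga lg fx by metis
  next
    case 3
    have fx: "fst x = move_pos k n tu p" using 3 yp move_X_fst by metis
    have "move_pos k n tu p ! a \<noteq> e" using tu_a[OF p lt] agree ij aj by auto
    then show ?thesis using ga lg fx by metis
  qed
qed

lemma sg_moves_r: "move_pos k n sg r \<noteq> r"
proof -
  have "in_layer n sg r" by (simp add: layer_sg)
  then have "move_pos k n sg r ! a \<noteq> e" using sg_a[OF rpos] by simp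
  then show ?thesis by metis
qed

lemma al_r: "comb_pos k n al r = move_pos k n sg r"
proof -
  obtain u v where uv: "tu = (u, v, cst)" "(u = a \<and> v = j) \<or> (u = j \<and> v = a)" "u \<noteq> v"
    "(u = a \<and> e \<noteq> k - 1 - r ! j) \<or> (u = j \<and> e = k - 1 - r ! j)"
  proof (cases "e \<noteq> k - 1 - r ! j")
    case True then show ?thesis using that[of a j] aj by (auto simp: tu_def)
  next
    case False then show ?thesis using that[of j a] aj by (auto simp: tu_def)
  qed
  have un: "u < n" "v < n" using uv an ij by auto
  define q1 where "q1 = psi k v u r"
  have q1p: "q1 \<in> positions k n" unfolding q1_def using psi_positions[OF rpos un(2,1)] uv by auto
  have q1L: "in_layer n tu q1" unfolding layer_tu q1_def using uv rL un by (auto simp: psi_nth)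
  have tq1: "move_pos k n tu q1 = r"
    using move_pos_in[of n u v cst q1 k] q1L uv psi_inv[OF rpos un] by (simp add: q1_def)
  have t3: "move_pos k n tu (move_pos k n tu (move_pos k n tu r)) = q1"
    using move_pos_4[OF valid_tu q1p] tq1 by simp
  have rjk: "r ! j < k" "e < k" using rk ij an by auto
  have q1j: "q1 ! j \<noteq> r ! j"
    using uv rL un rjk cj by (auto simp: q1_def psi_nth)
  have "\<not> in_layer n sg q1" using q1j ij ai aj unfolding layer_sg by blast
  then have s1: "move_pos k n sg q1 = q1" by (rule move_pos_notin)
  show ?thesis using t3 s1 tq1 by (simp add: al_def comb_pos_def)
qed

definition "Kl = [\<gamma>, \<gamma>, \<gamma>] @ cinv al @ [\<gamma>] @ al"

lemma valid_Kl: "valid_comb k n Kl"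
  using valid_al valid_cinv[OF valid_al] vg by (auto simp: Kl_def valid_comb_def)

abbreviation "ar \<equiv> comb_pos k n al r"
abbreviation "gr \<equiv> psi k i j r"

lemma Kl_X:
  assumes x: "fst x \<in> positions k n" and q: "fst x \<noteq> r" "fst x \<noteq> ar" "fst x \<noteq> gr"
  shows "comb_X k n Kl x = x"
proof (rule ccontr)
  assume mv: "comb_X k n Kl x \<noteq> x"
  let ?A = "comb_X k n al" and ?A' = "comb_X k n (cinv al)" and ?G = "move_X k n \<gamma>"
  let ?G' = "\<lambda>x. ?G (?G (?G x))"
  have eq: "comb_X k n Kl x = ?A (?G (?A' (?G' x)))" by (simp add: Kl_def comb_X_def)
  have "\<exists>y\<in>\<Omega>. ?A y \<noteq> y \<and> ?G y \<noteq> y \<and> (x = y \<or> x = ?A y \<or> x = ?G y)"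
  proof (rule comm_supp[where A' = ?A' and G' = ?G'])
    show "\<And>x. x \<in> \<Omega> \<Longrightarrow> ?A x \<in> \<Omega>" using comb_X_Omega[OF valid_al] by simp
    show "\<And>x. x \<in> \<Omega> \<Longrightarrow> ?A' x \<in> \<Omega>" using comb_X_Omega[OF valid_cinv[OF valid_al]] by simp
    show "\<And>x. x \<in> \<Omega> \<Longrightarrow> ?A' (?A x) = x" using cinv_left[OF valid_al] by simp
    show "\<And>x. x \<in> \<Omega> \<Longrightarrow> ?A (?A' x) = x" using cinv_right[OF valid_al] by simp
    show "\<And>x. x \<in> \<Omega> \<Longrightarrow> ?G x \<in> \<Omega>" using move_X_Omega[OF vg] by simp
    show "\<And>x. x \<in> \<Omega> \<Longrightarrow> ?G' x \<in> \<Omega>" using three_X[OF vg] by simp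
    show "\<And>x. x \<in> \<Omega> \<Longrightarrow> ?G' (?G x) = x" using move_X_4[OF vg] by simp
    show "\<And>x. x \<in> \<Omega> \<Longrightarrow> ?G (?G' x) = x" using move_X_4[OF vg] by simp
    show "x \<in> \<Omega>" using x by simp
    show "?A (?G (?A' (?G' x))) \<noteq> x" using mv eq by simp
  qed
  then obtain y where y: "fst y \<in> positions k n" "?A y \<noteq> y" "?G y \<noteq> y" "x = y \<or> x = ?A y \<or> x = ?G y"
    by auto
  obtain p l where yp: "y = (p, l)" by (cases y)
  have lg: "in_layer n \<gamma> p" using y(3) yp move_X_notin by (metis fst_conv)
  have "p = r" using F2[of y] y lg yp by simp
  then have "fst x = r \<or> fst x = ar \<or> fst x = gr"
    using y(4) yp comb_X_fst move_X_in[OF lg] by (metis fst_conv)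
  then show False using q by blast
qed

lemma P1:
  assumes "q \<in> positions k n" "in_layer n \<gamma> q" "comb_pos k n al q \<noteq> q"
  shows "q = r"
proof -
  have "comb_X k n al (q, 0) \<noteq> (q, 0)" using assms(3) comb_X_fst by (metis fst_conv)
  then show ?thesis using F2[of "(q,0)"] assms by simp
qed


lemma K_pos:
  "comb_pos k n Kl r = ar" "comb_pos k n Kl ar = gr" "comb_pos k n Kl gr = r"
  "ar \<noteq> r" "gr \<noteq> r" "ar \<noteq> gr"
proof -
  let ?P = "comb_pos k n al" and ?P' = "comb_pos k n (cinv al)" and ?g = "move_pos k n \<gamma>"
  have Kq: "\<And>q. comb_pos k n Kl q = ?P (?g (?P' (?g (?g (?g q)))))"
    by (simp add: Kl_def comb_pos_def)
  have gpos: "\<And>q. q \<in> positions k n \<Longrightarrow> ?g q \<in> positions k n" using move_pos_positions[OF vg] .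
  have glay: "\<And>q. q \<in> positions k n \<Longrightarrow> in_layer n \<gamma> (?g q) = in_layer n \<gamma> q"
  proof -
    fix q assume q: "q \<in> positions k n"
    show "in_layer n \<gamma> (?g q) = in_layer n \<gamma> q"
    proof (cases "in_layer n \<gamma> q")
      case True
      then show ?thesis using in_layer_psi[of q n i j c k] q ij move_pos_in[OF True]
        by (simp add: positions_def)
    next
      case False then show ?thesis using move_pos_notin by metis
    qed
  qed
  have g4: "\<And>q. q \<in> positions k n \<Longrightarrow> ?g (?g (?g (?g q))) = q" using move_pos_4[OF vg] .
  have grr: "?g r = gr" using move_pos_in[OF rin] .
  have grp: "gr \<in> positions k n" using gpos[OF rpos] grr by simp
  have grl: "in_layer n \<gamma> gr" using glay[OF rpos] rin grr by simp
  have arr: "ar \<noteq> r" using al_r sg_moves_r by simp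
  have arp: "ar \<in> positions k n" using comb_pos_positions[OF valid_al rpos] .
  have P'ar: "?P' ar = r" using cinv_left_pos[OF valid_al rpos] .
  have Par: "?P ar \<noteq> ar"
  proof
    assume "?P ar = ar"
    then have "?P' (?P ar) = ?P' ar" by simp
    then show False using cinv_left_pos[OF valid_al arp] P'ar arr by simp
  qed
  have arl: "\<not> in_layer n \<gamma> ar" using P1[OF arp _ Par] arr by blast
  have gar: "?g ar = ar" using move_pos_notin[OF arl] .
  show "ar \<noteq> r" by (rule arr)
  show "gr \<noteq> r" by (rule rmov)
  show "ar \<noteq> gr" using arl grl by metis
  define u where "u = ?g (?g (?g r))"
  have up: "u \<in> positions k n" unfolding u_def using gpos rpos by blast
  have gu: "?g u = r" unfolding u_def using g4[OF rpos] .
  have ul: "in_layer n \<gamma> u" unfolding u_def using glay rpos gpos rin by metis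
  have ur: "u \<noteq> r" using gu grr rmov by metis
  have Pu: "?P u = u" using P1[OF up ul] ur by blast
  have P'u: "?P' u = u" using cinv_left_pos[OF valid_al up] Pu by simp
  show "comb_pos k n Kl r = ar" using Kq[of r] P'u gu by (simp add: u_def)
  have Pgr: "?P gr = gr" using P1[OF grp grl] rmov by blast
  show "comb_pos k n Kl ar = gr" using Kq[of ar] gar P'ar grr Pgr by simp
  define w where "w = ?P' r"
  have wp: "w \<in> positions k n" unfolding w_def using comb_pos_positions[OF valid_cinv[OF valid_al] rpos] .
  have Pw: "?P w = r" unfolding w_def using cinv_right_pos[OF valid_al rpos] .
  have wr: "w \<noteq> r" using Pw arr by metis
  have wl: "\<not> in_layer n \<gamma> w" using P1[OF wp _] Pw wr by metis
  have gw: "?g w = w" using move_pos_notin[OF wl] .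
  have "?g (?g (?g gr)) = r" using g4[OF rpos] grr by simp
  then show "comb_pos k n Kl gr = r" using Kq[of gr] gw Pw by (simp add: w_def)
qed

end

lemma three_cycle_exists:
  assumes "r \<in> positions k n" "valid_move k n (i, j, c)" "in_layer n (i, j, c) r"
    "psi k i j r \<noteq> r" "a < n" "a \<noteq> i" "a \<noteq> j"
    "\<not> (r ! a = r ! i \<and> r ! a = k - 1 - r ! i)"
    "\<not> (r ! a = r ! j \<and> r ! a = k - 1 - r ! j)"
  shows "\<exists>K h. valid_comb k n K \<and> valid_comb k n h \<and>
     distinct [r, comb_pos k n h r, psi k i j r] \<and>
     comb_pos k n K r = comb_pos k n h r \<and> comb_pos k n K (comb_pos k n h r) = psi k i j r \<and>
     comb_pos k n K (psi k i j r) = r \<and>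
     (\<forall>x. fst x \<in> positions k n \<and> fst x \<notin> {r, comb_pos k n h r, psi k i j r} \<longrightarrow> comb_X k n K x = x)"
proof -
  interpret geo k n r i j a c using assms by unfold_locales
  show ?thesis
    apply (rule exI[of _ Kl], rule exI[of _ al])
    using valid_Kl valid_al K_pos Kl_X by auto
qed




definition Ef :: "nat \<Rightarrow> nat \<Rightarrow> nat \<Rightarrow> nat \<Rightarrow> nat list" where
  "Ef k n t v = (replicate n ((k - 1) div 2))[t := v]"

lemma Ef_nth: "s < n \<Longrightarrow> Ef k n t v ! s = (if s = t then v else (k - 1) div 2)"
  by (auto simp: Ef_def nth_list_update)

lemma Ef_len[simp]: "length (Ef k n t v) = n" by (simp add: Ef_def)



lemma frame_char:
  assumes "odd k" "k \<ge> 2"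
  shows "q \<in> frame_class k n \<longleftrightarrow> (\<exists>t<n. \<exists>v. (v = 0 \<or> v = k - 1) \<and> q = Ef k n t v)"
proof -
  let ?h = "(k - 1) div 2"
  have h: "?h \<noteq> 0" "?h \<noteq> k - 1" "?h < k" "k - 1 - ?h = ?h" using assms by (auto elim!: oddE)
  show ?thesis
  proof
    assume q: "q \<in> frame_class k n"
    then have qp: "q \<in> positions k n" and c1: "card (Bset k q) = 1"
      and oth: "\<forall>i<n. i \<notin> Bset k q \<longrightarrow> q ! i = ?h" using assms by (auto simp: frame_class_def)
    obtain t where Bt: "Bset k q = {t}" using c1 card_1_singletonE by blast
    have qL: "length q = n" using qp by (simp add: positions_def)
    have tn: "t < n" and tv: "q ! t = 0 \<or> q ! t = k - 1" using Bt qL by (auto simp: Bset_def)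
    have "q = Ef k n t (q ! t)"
    proof (rule nth_equalityI)
      show "length q = length (Ef k n t (q ! t))" using qL by simp
      fix s assume "s < length q"
      then show "q ! s = Ef k n t (q ! t) ! s" using oth Bt qL by (auto simp: Ef_nth)
    qed
    then show "\<exists>t<n. \<exists>v. (v = 0 \<or> v = k - 1) \<and> q = Ef k n t v" using tn tv by blast
  next
    assume "\<exists>t<n. \<exists>v. (v = 0 \<or> v = k - 1) \<and> q = Ef k n t v"
    then obtain t v where t: "t < n" "v = 0 \<or> v = k - 1" "q = Ef k n t v" by blast
    have B: "Bset k q = {t}" using t h by (auto simp: Bset_def Ef_nth split: if_splits)
    have "q \<in> positions k n" using t h assms by (auto simp: positions_def Ef_nth)
    then show "q \<in> frame_class k n" using B assms t by (auto simp: frame_class_def Ef_nth)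
  qed
qed

lemma psi_Ef:
  assumes "odd k" "k \<ge> 2" "u < n" "w < n" "u \<noteq> w" "t < n"
  shows "psi k u w (Ef k n t v) =
    (if t = u then Ef k n w v else if t = w then Ef k n u (k - 1 - v) else Ef k n t v)"
proof -
  let ?h = "(k - 1) div 2"
  have h: "k - 1 - ?h = ?h" using assms by (auto elim!: oddE)
  show ?thesis
    by (rule nth_equalityI) (use assms h in \<open>auto simp: psi_nth Ef_nth\<close>)
qed

lemma frame_move:
  assumes "odd k" "k \<ge> 2" "q \<in> frame_class k n" "valid_move k n m"
  shows "move_pos k n m q \<in> frame_class k n"
proof -
  obtain t v where t: "t < n" "v = 0 \<or> v = k - 1" "q = Ef k n t v"
    using assms frame_char by blast
  obtain u w c where m: "m = (u, w, c)" by (cases m)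
  have v: "u < n" "w < n" "u \<noteq> w" using assms(4) m by (auto simp: valid_move_def)
  have kv: "k - 1 - v = 0 \<or> k - 1 - v = k - 1" using t(2) by auto
  show ?thesis
  proof (cases "in_layer n m q")
    case False then show ?thesis using move_pos_notin assms by metis
  next
    case True
    then have "move_pos k n m q = psi k u w (Ef k n t v)" using m t move_pos_in by simp
    then show ?thesis using psi_Ef[OF assms(1,2) v t(1)] frame_char[OF assms(1,2)] v t kv
      by (metis (no_types, lifting))
  qed
qed

lemma frame_comb:
  assumes "odd k" "k \<ge> 2" "q \<in> frame_class k n" "valid_comb k n g"
  shows "comb_pos k n g q \<in> frame_class k n"
  using assms(3,4)
proof (induction g arbitrary: q)
  case Nil then show ?case by simp
next
  case (Cons m g)
  then show ?case using frame_move[OF assms(1,2) Cons.prems(1)]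
    by (simp add: comb_pos_Cons valid_comb_def)
qed

lemma Ef_step1:
  assumes "odd k" "k \<ge> 2" "t < n" "s < n" "t \<noteq> s" "v < k"
  shows "valid_move k n (t, s, \<lambda>_. (k - 1) div 2) \<and> move_pos k n (t, s, \<lambda>_. (k - 1) div 2) (Ef k n t v) = Ef k n s v"
proof -
  have l: "in_layer n (t, s, \<lambda>_. (k - 1) div 2) (Ef k n t v)"
    using assms by (auto simp: in_layer_def Ef_nth)
  have e: "psi k t s (Ef k n t v) = Ef k n s v" using psi_Ef[OF assms(1,2,3,4,5,3)] by simp
  have "(k - 1) div 2 < k" using assms by simp
  then show ?thesis using assms move_pos_in[OF l] e by (simp add: valid_move_def)
qed

lemma Ef_step2:
  assumes "odd k" "k \<ge> 2" "t < n" "s < n" "t \<noteq> s" "v < k"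
  shows "valid_move k n (s, t, \<lambda>_. (k - 1) div 2) \<and> move_pos k n (s, t, \<lambda>_. (k - 1) div 2) (Ef k n t v) = Ef k n s (k - 1 - v)"
proof -
  have l: "in_layer n (s, t, \<lambda>_. (k - 1) div 2) (Ef k n t v)"
    using assms by (auto simp: in_layer_def Ef_nth)
  have e: "psi k s t (Ef k n t v) = Ef k n s (k - 1 - v)"
    using psi_Ef[OF assms(1,2,4,3) _ assms(3), of v] assms(5) by simp
  have "(k - 1) div 2 < k" using assms by simp
  then show ?thesis using assms move_pos_in[OF l] e by (simp add: valid_move_def)
qed

lemma frame_reach:
  assumes "odd k" "k \<ge> 2" "n \<ge> 2" "r \<in> frame_class k n" "q \<in> frame_class k n"
  shows "\<exists>g. valid_comb k n g \<and> comb_pos k n g r = q"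
proof -
  obtain t v where t: "t < n" "v = 0 \<or> v = k - 1" "r = Ef k n t v"
    using assms frame_char by blast
  obtain t' v' where t': "t' < n" "v' = 0 \<or> v' = k - 1" "q = Ef k n t' v'"
    using assms frame_char by blast
  have vk: "v < k" "v' < k" using t t' assms by auto
  show ?thesis
  proof (cases "t = t'")
    case True
    show ?thesis
    proof (cases "v = v'")
      case True then show ?thesis using \<open>t = t'\<close> t t' by (intro exI[of _ "[]"]) (auto simp: valid_comb_def)
    next
      case False
      then have vv: "v' = k - 1 - v" using t(2) t'(2) by auto
      obtain s where s: "s < n" "s \<noteq> t"
        using that[of "if t = 0 then 1 else 0"] assms(3) by (cases "t = 0") auto
      have m1: "valid_move k n (t, s, \<lambda>_. (k - 1) div 2)" "move_pos k n (t, s, \<lambda>_. (k - 1) div 2) r = Ef k n s v"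
        using Ef_step1[OF assms(1,2) t(1) s(1) s(2)[symmetric] vk(1)] t by auto
      have m2: "move_pos k n (t, s, \<lambda>_. (k - 1) div 2) (Ef k n s v) = Ef k n t (k - 1 - v)"
        using Ef_step2[OF assms(1,2) s(1) t(1) s(2) vk(1)] by auto
      show ?thesis
        apply (rule exI[of _ "[(t, s, \<lambda>_. (k - 1) div 2), (t, s, \<lambda>_. (k - 1) div 2)]"])
        using m1 m2 vv t' True by (simp add: valid_comb_def comb_pos_Cons)
    qed
  next
    case False
    show ?thesis
    proof (cases "v = v'")
      case True
      have m: "valid_move k n (t, t', \<lambda>_. (k - 1) div 2)" "move_pos k n (t, t', \<lambda>_. (k - 1) div 2) r = Ef k n t' v"
        using Ef_step1[OF assms(1,2) t(1) t'(1) False vk(1)] t by auto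
      show ?thesis
        apply (rule exI[of _ "[(t, t', \<lambda>_. (k - 1) div 2)]"])
        using m True t' by (simp add: valid_comb_def comb_pos_Cons)
    next
      case F2: False
      then have vv: "v' = k - 1 - v" using t(2) t'(2) by auto
      have m: "valid_move k n (t', t, \<lambda>_. (k - 1) div 2)" "move_pos k n (t', t, \<lambda>_. (k - 1) div 2) r = Ef k n t' (k - 1 - v)"
        using Ef_step2[OF assms(1,2) t(1) t'(1) False vk(1)] t by auto
      show ?thesis
        apply (rule exI[of _ "[(t', t, \<lambda>_. (k - 1) div 2)]"])
        using m vv t' by (simp add: valid_comb_def comb_pos_Cons)
    qed
  qed
qed




lemma mid_half: "(x::nat) = k - 1 - x \<Longrightarrow> 2 \<le> k \<Longrightarrow> x = (k - 1) div 2"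
proof -
  assume "(x::nat) = k - 1 - x" "2 \<le> k"
  then have "k - 1 = 2 * x" by linarith
  then show ?thesis by simp
qed
lemma mid_odd: "(x::nat) = k - 1 - x \<Longrightarrow> 2 \<le> k \<Longrightarrow> odd k"
  by presburger

lemma frame_if:
  assumes "k \<ge> 2" "r \<in> positions k n" "Bset k r \<noteq> {}" "j < n" "i < n" "i \<noteq> j"
    and mid: "\<forall>t<n. t \<noteq> j \<longrightarrow> r ! t = k - 1 - r ! t"
  shows "r \<in> frame_class k n"
proof -
  have L: "length r = n" and rk: "\<And>t. t < n \<Longrightarrow> r ! t < k" using assms(2) by (auto simp: positions_def)
  have ri: "r ! i = k - 1 - r ! i" using mid assms by blast
  have ok: "odd k" using mid_odd ri assms(1) by blast
  have Bj: "Bset k r \<subseteq> {j}"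
  proof
    fix t assume t: "t \<in> Bset k r"
    then have tn: "t < n" and tb: "r ! t = 0 \<or> r ! t = k - 1" using L by (auto simp: Bset_def)
    show "t \<in> {j}"
    proof (rule ccontr)
      assume "t \<notin> {j}"
      then have "r ! t = k - 1 - r ! t" using mid tn by blast
      then show False using tb assms(1) by auto
    qed
  qed
  then have B: "Bset k r = {j}" using assms(3) by blast
  have oth: "\<forall>t<n. t \<notin> Bset k r \<longrightarrow> r ! t = (k - 1) div 2"
  proof (intro allI impI)
    fix t assume "t < n" "t \<notin> Bset k r"
    then have "r ! t = k - 1 - r ! t" using mid B by blast
    then show "r ! t = (k - 1) div 2" using mid_half assms(1) by blast
  qed
  show ?thesis using ok B oth assms(2) by (simp add: frame_class_def)
qed

lemma choose_a:
  assumes "k \<ge> 2" "n \<ge> 3" "r \<in> positions k n" "Bset k r \<noteq> {}" "r \<notin> frame_class k n"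
    "i < n" "j < n" "i \<noteq> j" "psi k i j r \<noteq> r"
  shows "\<exists>a<n. a \<noteq> i \<and> a \<noteq> j \<and> \<not> (r ! a = r ! i \<and> r ! a = k - 1 - r ! i) \<and>
     \<not> (r ! a = r ! j \<and> r ! a = k - 1 - r ! j)"
proof -
  have L: "length r = n" and rk: "\<And>t. t < n \<Longrightarrow> r ! t < k" using assms(3) by (auto simp: positions_def)
  have nfix: "\<not> (r ! i = k - 1 - r ! j \<and> r ! j = r ! i)"
  proof
    assume h: "r ! i = k - 1 - r ! j \<and> r ! j = r ! i"
    have "psi k i j r = r"
    proof (rule nth_equalityI)
      show "length (psi k i j r) = length r" by simp
      fix t assume "t < length (psi k i j r)"
      then have "psi k i j r ! t = (if t = i then k - 1 - r ! j else if t = j then r ! i else r ! t)"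
        using psi_nth[of i r j k t] L assms(6-8) by simp
      moreover note h1 = conjunct1[OF h, symmetric] and h2 = conjunct2[OF h, symmetric]
      ultimately show "psi k i j r ! t = r ! t"
      proof (cases "t = i")
        case True then show ?thesis using \<open>psi k i j r ! t = _\<close> h1 by simp
      next
        case False then show ?thesis using \<open>psi k i j r ! t = _\<close> h2 by (cases "t = j") simp_all
      qed
    qed
    then show False using assms(9) by simp
  qed
  show ?thesis
  proof (cases "\<exists>a<n. a \<noteq> i \<and> a \<noteq> j \<and> r ! a \<noteq> k - 1 - r ! a")
    case True then show ?thesis by auto
  next
    case False
    then have H: "\<forall>a<n. a \<noteq> i \<and> a \<noteq> j \<longrightarrow> r ! a = k - 1 - r ! a" by blast
    have rki: "r ! i < k" "r ! j < k" using rk assms(6,7) by auto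
    consider "r ! i \<noteq> k - 1 - r ! i \<and> r ! j \<noteq> k - 1 - r ! j"
      | "r ! i = k - 1 - r ! i \<and> r ! j = k - 1 - r ! j"
      | "r ! i = k - 1 - r ! i \<and> r ! j \<noteq> k - 1 - r ! j"
      | "r ! i \<noteq> k - 1 - r ! i \<and> r ! j = k - 1 - r ! j" by blast
    then show ?thesis
    proof cases
      case 1
      obtain a where a: "a < n" "a \<noteq> i" "a \<noteq> j"
      proof -
        have "\<exists>a\<in>{0,1,2}. a \<noteq> i \<and> a \<noteq> j" by auto
        then obtain a where "a \<in> {0,1,2}" "a \<noteq> i" "a \<noteq> j" by blast
        moreover have "a < n" using calculation(1) assms(2) by auto
        ultimately show ?thesis using that by blast
      qed
      then show ?thesis using 1 by (intro exI[of _ a]) auto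
    next
      case 2 then show ?thesis using nfix rki by linarith
    next
      case 3
      have "\<forall>t<n. t \<noteq> j \<longrightarrow> r ! t = k - 1 - r ! t" using H 3 by blast
      then have "r \<in> frame_class k n" using frame_if[OF assms(1,3,4,7,6,8)] by blast
      then show ?thesis using assms(5) by blast
    next
      case 4
      have "\<forall>t<n. t \<noteq> i \<longrightarrow> r ! t = k - 1 - r ! t" using H 4 by blast
      then have "r \<in> frame_class k n" using frame_if[OF assms(1,3,4,6,7) assms(8)[symmetric]] by blast
      then show ?thesis using assms(5) by blast
    qed
  qed
qed

lemma move_external:
  assumes "valid_move k n m" "p \<in> positions k n" "Bset k p \<noteq> {}"
  shows "Bset k (move_pos k n m p) \<noteq> {}"
proof -
  obtain u w c where m: "m = (u, w, c)" by (cases m)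
  have v: "u < n" "w < n" "u \<noteq> w" using assms(1) m by (auto simp: valid_move_def)
  have L: "length p = n" using assms(2) by (simp add: positions_def)
  obtain t where t: "t < n" "p ! t = 0 \<or> p ! t = k - 1" using assms(3) L by (auto simp: Bset_def)
  show ?thesis
  proof (cases "in_layer n m p")
    case False then show ?thesis using move_pos_notin assms(3) by metis
  next
    case True
    have e: "move_pos k n m p = psi k u w p" using True m move_pos_in by simp
    have "t \<noteq> u \<Longrightarrow> t \<noteq> w \<Longrightarrow> t \<in> Bset k (psi k u w p)"
      using t L v by (auto simp: Bset_def psi_nth)
    moreover have "t = u \<Longrightarrow> w \<in> Bset k (psi k u w p)"
      using t L v by (auto simp: Bset_def psi_nth)
    moreover have "t = w \<Longrightarrow> u \<in> Bset k (psi k u w p)"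
      using t L v by (auto simp: Bset_def psi_nth)
    ultimately have "\<exists>x. x \<in> Bset k (psi k u w p)"
      by (cases "t = u"; cases "t = w") blast+
    then show ?thesis using e by auto
  qed
qed

lemma comb_external:
  assumes "valid_comb k n g" "p \<in> positions k n" "Bset k p \<noteq> {}"
  shows "Bset k (comb_pos k n g p) \<noteq> {}"
  using assms
proof (induction g arbitrary: p)
  case Nil then show ?case by simp
next
  case (Cons m g)
  have vm: "valid_move k n m" and vg: "valid_comb k n g" using Cons.prems by (auto simp: valid_comb_def)
  show ?case using Cons.IH[OF vg move_pos_positions[OF vm Cons.prems(2)] move_external[OF vm Cons.prems(2,3)]]
    by (simp add: comb_pos_Cons)
qed

definition realizes :: "nat \<Rightarrow> nat \<Rightarrow> nat list set \<Rightarrow> move list \<Rightarrow> (nat list \<Rightarrow> nat list) \<Rightarrow> bool" where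
  "realizes k n A g \<rho> \<longleftrightarrow> valid_comb k n g \<and> (\<forall>p\<in>A. comb_pos k n g p = \<rho> p) \<and>
     (\<forall>q l. external k n q \<and> q \<notin> A \<and> l \<in> Bset k q \<longrightarrow> comb_X k n g (q, l) = (q, l))"

definition Nr :: "nat \<Rightarrow> nat \<Rightarrow> nat list set \<Rightarrow> (nat list \<Rightarrow> nat list) \<Rightarrow> bool" where
  "Nr k n A \<rho> \<longleftrightarrow> (\<exists>g. realizes k n A g \<rho>)"

lemma Nr_cc: "cyc_closed A (Nr k n A)"
proof
  fix f g assume f: "Nr k n A f" and g: "Nr k n A g" and im: "f ` A \<subseteq> A"
  obtain gf where gf: "realizes k n A gf f" using f by (auto simp: Nr_def)
  obtain gg where gg: "realizes k n A gg g" using g by (auto simp: Nr_def)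
  have "realizes k n A (gf @ gg) (g \<circ> f)"
    using gf gg im unfolding realizes_def
    by (auto simp: comb_pos_append comb_X_append valid_comb_def)
  then show "Nr k n A (g \<circ> f)" by (auto simp: Nr_def)
qed

lemma Nr_id: "Nr k n A id"
  unfolding Nr_def realizes_def by (intro exI[of _ "[]"]) (simp add: valid_comb_def)

lemma finite_positions: "finite (positions k n)"
proof -
  have "positions k n \<subseteq> {xs. set xs \<subseteq> {..<k} \<and> length xs = n}"
    by (auto simp: positions_def in_set_conv_nth)
  then show ?thesis using finite_lists_length_eq[of "{..<k}" n] finite_subset by blast
qed




theorem mainTheorem4:
  fixes k n :: nat and A :: "nat list set" and \<pi> :: "nat list \<Rightarrow> nat list"
  assumes "k \<ge> 2" and "n \<ge> 3"
    and "conn_class k n A"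
    and "odd k \<longrightarrow> A \<noteq> frame_class k n"
    and "\<pi> permutes A" and "evenperm \<pi>"
  shows "\<exists>g. valid_comb k n g \<and>
           (\<forall>p\<in>A. comb_pos k n g p = \<pi> p) \<and>
           (\<forall>q l. external k n q \<and> q \<notin> A \<and> l \<in> Bset k q \<longrightarrow>
                  comb_X k n g (q, l) = (q, l))"
proof -
  obtain p0 where p0: "external k n p0" and Adef: "A = {comb_pos k n g p0 | g. valid_comb k n g}"
    using assms(3) by (auto simp: conn_class_def)
  have p0p: "p0 \<in> positions k n" and p0B: "Bset k p0 \<noteq> {}" using p0 by (auto simp: external_def)
  have Apos: "\<And>p. p \<in> A \<Longrightarrow> p \<in> positions k n"
    using Adef comb_pos_positions p0p by blast
  have Acomb: "\<And>p g. p \<in> A \<Longrightarrow> valid_comb k n g \<Longrightarrow> comb_pos k n g p \<in> A"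
  proof -
    fix p g assume "p \<in> A" "valid_comb k n g"
    then obtain g0 where "valid_comb k n g0" "p = comb_pos k n g0 p0" using Adef by blast
    then have "comb_pos k n g p = comb_pos k n (g0 @ g) p0" "valid_comb k n (g0 @ g)"
      using \<open>valid_comb k n g\<close> by (auto simp: comb_pos_append valid_comb_def)
    then show "comb_pos k n g p \<in> A" using Adef by blast
  qed
  have Amove: "\<And>p m. p \<in> A \<Longrightarrow> valid_move k n m \<Longrightarrow> move_pos k n m p \<in> A"
    using Acomb[of _ "[_]"] by (simp add: valid_comb_def comb_pos_Cons)
  have Aext: "\<And>p. p \<in> A \<Longrightarrow> Bset k p \<noteq> {}"
    using Adef comb_external p0p p0B by blast
  have Areach: "\<And>r q. r \<in> A \<Longrightarrow> q \<in> A \<Longrightarrow> \<exists>g. valid_comb k n g \<and> comb_pos k n g r = q"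
  proof -
    fix r q assume "r \<in> A" "q \<in> A"
    then obtain g1 g2 where g: "valid_comb k n g1" "r = comb_pos k n g1 p0"
      "valid_comb k n g2" "q = comb_pos k n g2 p0" using Adef by blast
    have "comb_pos k n (cinv g1 @ g2) r = q"
      using cinv_left_pos[OF g(1) p0p] g by (simp add: comb_pos_append)
    moreover have "valid_comb k n (cinv g1 @ g2)" using valid_cinv[OF g(1)] g(3)
      by (auto simp: valid_comb_def)
    ultimately show "\<exists>g. valid_comb k n g \<and> comb_pos k n g r = q" by blast
  qed
  have notframe: "\<And>r. r \<in> A \<Longrightarrow> r \<notin> frame_class k n"
  proof
    fix r assume rA: "r \<in> A" and rf: "r \<in> frame_class k n"
    have ok: "odd k" using rf by (auto simp: frame_class_def split: if_splits)
    have "frame_class k n \<subseteq> A"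
    proof
      fix q assume "q \<in> frame_class k n"
      then obtain g where "valid_comb k n g" "comb_pos k n g r = q"
        using frame_reach[OF ok assms(1) _ rf] assms(2) by fastforce
      then show "q \<in> A" using Acomb rA by blast
    qed
    moreover have "A \<subseteq> frame_class k n"
    proof
      fix q assume "q \<in> A"
      then obtain g where "valid_comb k n g" "comb_pos k n g r = q" using Areach rA by blast
      then show "q \<in> frame_class k n" using frame_comb[OF ok assms(1) rf] by blast
    qed
    ultimately show False using assms(4) ok by blast
  qed
  interpret cc: cyc_closed A "Nr k n A" by (rule Nr_cc)
  have edge: "\<And>r m. r \<in> A \<Longrightarrow> valid_move k n m \<Longrightarrow> cc.E r (move_pos k n m r)"
  proof -
    fix r m assume rA: "r \<in> A" and vm: "valid_move k n m"
    obtain i j c where m: "m = (i, j, c)" by (cases m)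
    show "cc.E r (move_pos k n m r)"
    proof (cases "in_layer n m r \<and> psi k i j r \<noteq> r")
      case False
      then have "move_pos k n m r = r" using m move_pos_notin move_pos_in by metis
      then show ?thesis using rA by (simp add: cc.E_def)
    next
      case True
      have ij: "i < n" "j < n" "i \<noteq> j" using vm m by (auto simp: valid_move_def)
      have rp: "r \<in> positions k n" using Apos rA .
      obtain a where a: "a < n" "a \<noteq> i" "a \<noteq> j" "\<not> (r ! a = r ! i \<and> r ! a = k - 1 - r ! i)"
        "\<not> (r ! a = r ! j \<and> r ! a = k - 1 - r ! j)"
        using choose_a[OF assms(1,2) rp Aext[OF rA] notframe[OF rA] ij] True by blast
      obtain K h where Kh: "valid_comb k n K" "valid_comb k n h"
        "distinct [r, comb_pos k n h r, psi k i j r]"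
        "comb_pos k n K r = comb_pos k n h r" "comb_pos k n K (comb_pos k n h r) = psi k i j r"
        "comb_pos k n K (psi k i j r) = r"
        "\<And>x. fst x \<in> positions k n \<Longrightarrow> fst x \<notin> {r, comb_pos k n h r, psi k i j r} \<Longrightarrow> comb_X k n K x = x"
        using three_cycle_exists[OF rp vm[unfolded m] True[unfolded m, THEN conjunct1] True[THEN conjunct2] a]
        by blast
      define z where "z = comb_pos k n h r"
      define w where "w = psi k i j r"
      have mw: "move_pos k n m r = w" using True m move_pos_in w_def by metis
      have zA: "z \<in> A" using Acomb rA Kh(2) z_def by blast
      have wA: "w \<in> A" using Amove rA vm mw by metis
      have d: "distinct [r, z, w]" using Kh(3) z_def w_def by simp
      have "realizes k n A K (cyc3 r z w)"
        unfolding realizes_def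
      proof (intro conjI ballI allI impI)
        show "valid_comb k n K" by (rule Kh(1))
        fix p assume pA: "p \<in> A"
        show "comb_pos k n K p = cyc3 r z w p"
        proof (cases "p \<in> {r, z, w}")
          case True
          then show ?thesis using Kh(4-6) d by (auto simp: cyc3_def z_def w_def)
        next
          case False
          have "comb_X k n K (p, 0) = (p, 0)" using Kh(7)[of "(p,0)"] False Apos[OF pA] z_def w_def by simp
          then have "comb_pos k n K p = p" using comb_X_fst by (metis fst_conv)
          then show ?thesis using False by (simp add: cyc3_def)
        qed
      next
        fix q l assume q: "external k n q \<and> q \<notin> A \<and> l \<in> Bset k q"
        then have "q \<in> positions k n" "q \<notin> {r, z, w}" using rA zA wA by (auto simp: external_def)
        then show "comb_X k n K (q, l) = (q, l)" using Kh(7)[of "(q,l)"] z_def w_def by simp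
      qed
      then have "Nr k n A (cyc3 r z w)" by (auto simp: Nr_def)
      then have "Nr k n A (cyc3 r w z)" using cc.sq d rA zA wA by blast
      then show ?thesis using mw rA zA wA d by (auto simp: cc.E_def)
    qed
  qed
  have Esym: "\<And>x y. cc.E x y \<Longrightarrow> cc.E y x"
  proof -
    fix x y assume e: "cc.E x y"
    show "cc.E y x"
    proof (cases "x = y")
      case True then show ?thesis using e by (simp add: cc.E_def)
    next
      case False
      then obtain z where z: "z \<in> A" "distinct [x,y,z]" "Nr k n A (cyc3 x y z)" "x \<in> A" "y \<in> A"
        using e by (auto simp: cc.E_def)
      have "Nr k n A (cyc3 x z y)" using cc.sq z by blast
      moreover have "cyc3 x z y = cyc3 y x z" using cyc3_rot[of y x z] z(2)
        cyc3_rot[of x z y] by auto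
      ultimately show ?thesis using z by (auto simp: cc.E_def)
    qed
  qed
  have reachE: "\<And>g p. valid_comb k n g \<Longrightarrow> p \<in> A \<Longrightarrow> cc.E p (comb_pos k n g p)"
  proof -
    fix g
    show "\<And>p. valid_comb k n g \<Longrightarrow> p \<in> A \<Longrightarrow> cc.E p (comb_pos k n g p)"
    proof (induction g)
      case Nil then show ?case by (simp add: cc.E_def)
    next
      case (Cons m g)
      have vm: "valid_move k n m" and vg: "valid_comb k n g" using Cons.prems by (auto simp: valid_comb_def)
      have "cc.E p (move_pos k n m p)" using edge Cons.prems(2) vm by blast
      moreover have "cc.E (move_pos k n m p) (comb_pos k n g (move_pos k n m p))"
        using Cons.IH[OF vg Amove[OF Cons.prems(2) vm]] .
      ultimately show ?case using cc.E_trans by (simp add: comb_pos_Cons)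
    qed
  qed
  have allE: "\<And>x y. x \<in> A \<Longrightarrow> y \<in> A \<Longrightarrow> cc.E x y"
  proof -
    fix x y assume "x \<in> A" "y \<in> A"
    then obtain gx gy where "valid_comb k n gx" "x = comb_pos k n gx p0"
      "valid_comb k n gy" "y = comb_pos k n gy p0" using Adef by blast
    moreover have p0A: "p0 \<in> A" using Adef by (auto intro!: exI[of _ "[]"] simp: valid_comb_def)
    ultimately have "cc.E p0 x" "cc.E p0 y" using reachE by auto
    then show "cc.E x y" using Esym cc.E_trans by blast
  qed
  have "A \<subseteq> positions k n" using Apos by blast
  then have finA: "finite A" using finite_positions by (rule finite_subset)
  have "Nr k n A \<pi>"
  proof (rule even_decomp[OF finA assms(5,6)])
    show "Nr k n A id" by (rule Nr_id)
    show "\<And>a b c. distinct [a,b,c] \<Longrightarrow> a \<in> A \<Longrightarrow> b \<in> A \<Longrightarrow> c \<in> A \<Longrightarrow> Nr k n A (cyc3 a b c)"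
      using cc.all3 allE by blast
    show "\<And>f g. f permutes A \<Longrightarrow> Nr k n A f \<Longrightarrow> Nr k n A g \<Longrightarrow> Nr k n A (g \<circ> f)"
      using cc.comp permutes_image by (metis equalityE)
  qed
  then show ?thesis by (auto simp: Nr_def realizes_def)
qed



end
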